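(* Let $(X_1,Y_1),\ldots,(X_n,Y_n)$ satisfy $Y_i = F(X_i)+\epsilon_i$ with $\epsilon_1,\ldots,\epsilon_n$ i.i.d. $N(0,\sigma^2)$, and suppose $\|F\|_\infty$, the supremum of $|F|$ on the support of $X$, is finite. Let $B, B_o \ge 1$, and let $\hat{F}^c_{BB_o}(x) = 2\hat{F}_B(x) - \hat{F}^o_{B_o}(x)$ be the bias-corrected ensemble prediction at a point $x$ (as defined in the context), and let $\hat{F}^c_{\infty}(x)$ denote its infinite-ensemble counterpart, i.e. the expectation of $\hat{F}^c_{BB_o}(x)$ over all randomization elements (the $\Omega_b$ and $\Omega^o_{b'}$), conditional on the data. Then \[ E\left(\hat{F}^c_{BB_o}(x) - \hat{F}^c_{\infty}(x)\right)^2 \le \left(\frac{64}{B} + \frac{80}{B_o}\right)\left[\|F\|_\infty^2 + \sigma^2\,(1+4\log n)\right], \] where the expectation is over both the noise and the randomization.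
   Context: Ensemble of trees as local averaging estimators. A single tree learned with randomization parameter $\Omega$ (encoding the choice of bootstrap sample or subsample and any other internal randomness, e.g. random selection of candidate split variables) predicts at $x$ the value $T(x,\Omega)=\sum_{i=1}^n W_i(x,\Omega)Y_i$, where $W_i(x,\Omega) = L(x,X_i,\Omega)/N(x,\Omega)$, $L(x,X_i,\Omega)$ is the indicator that $x$ and $X_i$ fall in the same leaf, and $N(x,\Omega)$ is the number of training points in the leaf containing $x$; thus $0\le W_i(x,\Omega)\le 1$ and $\sum_i W_i(x,\Omega)=1$. With $\Omega_1,\ldots,\Omega_B$ i.i.d., the ensemble (random forest / bagged) prediction is $\hat{F}_B(x) = \frac1B\sum_{b=1}^B T(x,\Omega_b) = \sum_i \bar W_i^B(x) Y_i$, with $\bar W_i^B(x)=\frac1B\sum_b W_i(x,\Omega_b)$. Residual bootstrap ensemble. Each residual-bootstrap tree, with randomization parameter $\Omega^o$ (encoding the resampling of residuals, the resampling of data pairs and the tree's internal randomness), trained on responses $Y_i^o = \hat F_B(X_i) + \hat\epsilon_{j}$ formed by adding resampled residuals $\hat\epsilon_j = Y_j - \hat F_B(X_j)$ to the fitted values, predicts at $x$ the value $T^o(x,\Omega^o) = \sum_{i=1}^n\sum_{j=1}^n V_{ij}(x,\Omega^o)\,[\hat F_B(X_i) + (Y_j - \hat F_B(X_j))]$, with weights $0\le V_{ij}(x,\Omega^o)\le 1$ and $\sum_{i,j}V_{ij}(x,\Omega^o)=1$. With $\Omega^o_1,\ldots,\Omega^o_{B_o}$ i.i.d. and independent of $\Omega_1,\ldots,\Omega_B$,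 set $\hat F^o_{B_o}(x) = \frac{1}{B_o}\sum_{b'=1}^{B_o} T^o(x,\Omega^o_{b'})$. The bias-corrected prediction is $\hat F^c_{BB_o}(x) = 2\hat F_B(x) - \hat F^o_{B_o}(x)$. *)

theory Defs
  imports "HOL-Probability.Probability"
begin

text \<open>Fixed design points X i (i < n), responses Y i = F (X i) + e i with
  e = (e 0, ..., e (n-1)) i.i.d. N(0, sigma^2).\<close>

definition noise_measure :: "nat \<Rightarrow> real \<Rightarrow> (nat \<Rightarrow> real) measure" where
  "noise_measure n \<sigma> = PiM {..<n} (\<lambda>_. density lborel (normal_density 0 \<sigma>))"

definition responses :: "nat \<Rightarrow> ('a \<Rightarrow> real) \<Rightarrow> (nat \<Rightarrow> 'a) \<Rightarrow> (nat \<Rightarrow> real) \<Rightarrow> nat \<Rightarrow> real" where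
  "responses n F X e = (\<lambda>i\<in>{..<n}. F (X i) + e i)"

definition rand_measure :: "nat \<Rightarrow> nat \<Rightarrow> 'w measure \<Rightarrow> 'v measure
    \<Rightarrow> ((nat \<Rightarrow> 'w) \<times> (nat \<Rightarrow> 'v)) measure" where
  "rand_measure B Bo Q Qo = PiM {..<B} (\<lambda>_. Q) \<Otimes>\<^sub>M PiM {..<Bo} (\<lambda>_. Qo)"

text \<open>Ensemble prediction  F_B(x) = (1/B) sum_b sum_i W_i(x, Omega_b) Y_i.
  W x Y w i is the weight of training point i at x for the tree grown on data Y
  with randomization w.\<close>

definition ens :: "nat \<Rightarrow> ('a \<Rightarrow> (nat \<Rightarrow> real) \<Rightarrow> 'w \<Rightarrow> nat \<Rightarrow> real) \<Rightarrow> nat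
    \<Rightarrow> (nat \<Rightarrow> real) \<Rightarrow> (nat \<Rightarrow> 'w) \<Rightarrow> 'a \<Rightarrow> real" where
  "ens n W B Y \<Omega>s x = (\<Sum>b<B. \<Sum>i<n. W x Y (\<Omega>s b) i * Y i) / real B"

definition res_ens :: "nat \<Rightarrow> (nat \<Rightarrow> 'a) \<Rightarrow> ('a \<Rightarrow> (nat \<Rightarrow> real) \<Rightarrow> 'w \<Rightarrow> nat \<Rightarrow> real)
    \<Rightarrow> ('a \<Rightarrow> (nat \<Rightarrow> real) \<Rightarrow> 'v \<Rightarrow> nat \<Rightarrow> nat \<Rightarrow> real) \<Rightarrow> nat \<Rightarrow> nat
    \<Rightarrow> (nat \<Rightarrow> real) \<Rightarrow> (nat \<Rightarrow> 'w) \<Rightarrow> (nat \<Rightarrow> 'v) \<Rightarrow> 'a \<Rightarrow> real" where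
  "res_ens n X W V B Bo Y \<Omega>s \<Omega>os x =
     (\<Sum>b<Bo. \<Sum>i<n. \<Sum>j<n. V x Y (\<Omega>os b) i j *
        (ens n W B Y \<Omega>s (X i) + (Y j - ens n W B Y \<Omega>s (X j)))) / real Bo"

definition bc_ens :: "nat \<Rightarrow> (nat \<Rightarrow> 'a) \<Rightarrow> ('a \<Rightarrow> (nat \<Rightarrow> real) \<Rightarrow> 'w \<Rightarrow> nat \<Rightarrow> real)
    \<Rightarrow> ('a \<Rightarrow> (nat \<Rightarrow> real) \<Rightarrow> 'v \<Rightarrow> nat \<Rightarrow> nat \<Rightarrow> real) \<Rightarrow> nat \<Rightarrow> nat
    \<Rightarrow> (nat \<Rightarrow> real) \<Rightarrow> (nat \<Rightarrow> 'w) \<Rightarrow> (nat \<Rightarrow> 'v) \<Rightarrow> 'a \<Rightarrow> real" where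
  "bc_ens n X W V B Bo Y \<Omega>s \<Omega>os x =
     2 * ens n W B Y \<Omega>s x - res_ens n X W V B Bo Y \<Omega>s \<Omega>os x"

definition bc_inf :: "nat \<Rightarrow> (nat \<Rightarrow> 'a) \<Rightarrow> ('a \<Rightarrow> (nat \<Rightarrow> real) \<Rightarrow> 'w \<Rightarrow> nat \<Rightarrow> real)
    \<Rightarrow> ('a \<Rightarrow> (nat \<Rightarrow> real) \<Rightarrow> 'v \<Rightarrow> nat \<Rightarrow> nat \<Rightarrow> real) \<Rightarrow> nat \<Rightarrow> nat
    \<Rightarrow> 'w measure \<Rightarrow> 'v measure \<Rightarrow> (nat \<Rightarrow> real) \<Rightarrow> 'a \<Rightarrow> real" where
  "bc_inf n X W V B Bo Q Qo Y x =
     (\<integral>r. bc_ens n X W V B Bo Y (fst r) (snd r) x \<partial>rand_measure B Bo Q Qo)"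

end

theory Submission
  imports Defs
begin


lemma bnd_integrable:
  fixes f :: "'a \<Rightarrow> real"
  assumes "prob_space P" "f \<in> borel_measurable P" "\<And>x. x \<in> space P \<Longrightarrow> \<bar>f x\<bar> \<le> C"
  shows "integrable P f"
proof -
  interpret prob_space P by fact
  show ?thesis using assms(2,3) by (intro integrable_const_bound[where B=C]) auto
qed

lemma abs_mult_le:
  fixes a b C D :: real
  assumes "\<bar>a\<bar> \<le> C" "\<bar>b\<bar> \<le> D"
  shows "\<bar>a * b\<bar> \<le> C * D"
proof -
  have "0 \<le> C" using assms(1) by linarith
  then have "\<bar>a\<bar> * \<bar>b\<bar> \<le> C * D" using assms by (intro mult_mono) auto
  then show ?thesis by (simp add: abs_mult)
qed

lemma sq_le:
  fixes a C :: real
  assumes "\<bar>a\<bar> \<le> C" shows "a\<^sup>2 \<le> C\<^sup>2"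
  by (metis abs_ge_zero power2_abs power_mono assms)

lemma iid_comp:
  fixes g :: "'w \<Rightarrow> real" and N :: nat
  assumes M: "prob_space M" and b: "b < N" and g: "g \<in> borel_measurable M"
  shows "(\<integral>\<omega>. g (\<omega> b) \<partial>PiM {..<N} (\<lambda>_. M)) = integral\<^sup>L M g"
proof -
  have "distr (PiM {..<N} (\<lambda>_. M)) M (\<lambda>\<omega>. \<omega> b) = M"
    using distr_PiM_component[of "{..<N}" "\<lambda>_. M" b] M b by auto
  then have "integral\<^sup>L M g = integral\<^sup>L (distr (PiM {..<N} (\<lambda>_. M)) M (\<lambda>\<omega>. \<omega> b)) g" by simp
  also have "\<dots> = (\<integral>\<omega>. g (\<omega> b) \<partial>PiM {..<N} (\<lambda>_. M))"
    using b g by (intro integral_distr) auto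
  finally show ?thesis by simp
qed

lemma iid_pair:
  fixes g h :: "'w \<Rightarrow> real" and N :: nat
  assumes M: "prob_space M" and b: "b < N" "c < N" "b \<noteq> c"
    and g: "integrable M g" and h: "integrable M h"
  shows "(\<integral>\<omega>. g (\<omega> b) * h (\<omega> c) \<partial>PiM {..<N} (\<lambda>_. M)) = integral\<^sup>L M g * integral\<^sup>L M h"
proof -
  interpret product_prob_space "\<lambda>_. M" "{..<N}"
    using M by (simp add: product_prob_space_def product_prob_space_axioms_def
        product_sigma_finite_def prob_space_imp_sigma_finite)
  define f where "f i = (if i = b then g else if i = c then h else (\<lambda>_. 1::real))" for i
  have fint: "\<And>i. integrable M (f i)" unfolding f_def using g h
    by auto
  have pr: "(\<Prod>i\<in>{..<N}. f i (\<omega> i)) = g (\<omega> b) * h (\<omega> c)" for \<omega>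
  proof -
    have "(\<Prod>i\<in>{..<N}. f i (\<omega> i)) = f b (\<omega> b) * (\<Prod>i\<in>{..<N}-{b}. f i (\<omega> i))"
      using b by (intro prod.remove) auto
    also have "(\<Prod>i\<in>{..<N}-{b}. f i (\<omega> i)) = f c (\<omega> c) * (\<Prod>i\<in>{..<N}-{b}-{c}. f i (\<omega> i))"
      using b by (intro prod.remove) auto
    also have "(\<Prod>i\<in>{..<N}-{b}-{c}. f i (\<omega> i)) = 1"
      by (intro prod.neutral) (auto simp: f_def)
    finally show ?thesis using b by (simp add: f_def)
  qed
  have pr2: "(\<Prod>i\<in>{..<N}. integral\<^sup>L M (f i)) = integral\<^sup>L M g * integral\<^sup>L M h"
  proof -
    have "(\<Prod>i\<in>{..<N}. integral\<^sup>L M (f i)) = integral\<^sup>L M (f b) * (\<Prod>i\<in>{..<N}-{b}. integral\<^sup>L M (f i))"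
      using b by (intro prod.remove) auto
    also have "(\<Prod>i\<in>{..<N}-{b}. integral\<^sup>L M (f i)) = integral\<^sup>L M (f c) * (\<Prod>i\<in>{..<N}-{b}-{c}. integral\<^sup>L M (f i))"
      using b by (intro prod.remove) auto
    also have "(\<Prod>i\<in>{..<N}-{b}-{c}. integral\<^sup>L M (f i)) = 1"
      using M by (intro prod.neutral) (auto simp: f_def prob_space.prob_space[OF M])
    finally show ?thesis using b by (simp add: f_def)
  qed
  have "(\<integral>\<omega>. (\<Prod>i\<in>{..<N}. f i (\<omega> i)) \<partial>PiM {..<N} (\<lambda>_. M)) = (\<Prod>i\<in>{..<N}. integral\<^sup>L M (f i))"
    using fint by (intro product_integral_prod) auto
  then show ?thesis using pr pr2 by simp
qed

lemma var_shift:
  fixes f :: "'a \<Rightarrow> real"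
  assumes P: "prob_space P" and f: "f \<in> borel_measurable P"
    and bd: "\<And>x. x \<in> space P \<Longrightarrow> \<bar>f x\<bar> \<le> K"
  shows "(\<integral>x. (f x - d)\<^sup>2 \<partial>P) = (\<integral>x. (f x - integral\<^sup>L P f)\<^sup>2 \<partial>P) + (integral\<^sup>L P f - d)\<^sup>2"
proof -
  interpret prob_space P by fact
  define \<mu> where "\<mu> = integral\<^sup>L P f"
  have fi: "integrable P f" using bnd_integrable[OF P f bd] .
  have i2: "integrable P (\<lambda>x. (f x - \<mu>)\<^sup>2)"
  proof (rule bnd_integrable[OF P, where C="(K + \<bar>\<mu>\<bar>)\<^sup>2"])
    show "(\<lambda>x. (f x - \<mu>)\<^sup>2) \<in> borel_measurable P" using f by auto
    fix x assume "x \<in> space P"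
    then have "\<bar>f x - \<mu>\<bar> \<le> K + \<bar>\<mu>\<bar>" using bd[of x] by linarith
    then show "\<bar>(f x - \<mu>)\<^sup>2\<bar> \<le> (K + \<bar>\<mu>\<bar>)\<^sup>2"
      by (metis abs_ge_zero power2_abs power_mono abs_power2)
  qed
  have i3: "integrable P (\<lambda>x. 2 * (\<mu> - d) * (f x - \<mu>))"
    using fi by auto
  have eq: "(f x - d)\<^sup>2 = (f x - \<mu>)\<^sup>2 + 2 * (\<mu> - d) * (f x - \<mu>) + (\<mu> - d)\<^sup>2" for x
    by (simp add: power2_eq_square algebra_simps)
  have "(\<integral>x. (f x - d)\<^sup>2 \<partial>P) = (\<integral>x. (f x - \<mu>)\<^sup>2 + 2 * (\<mu> - d) * (f x - \<mu>) + (\<mu> - d)\<^sup>2 \<partial>P)"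
    by (simp only: eq)
  also have "\<dots> = (\<integral>x. (f x - \<mu>)\<^sup>2 \<partial>P) + (\<integral>x. 2 * (\<mu> - d) * (f x - \<mu>) \<partial>P) + (\<mu> - d)\<^sup>2"
    using i2 i3 by (simp add: integral_add prob_space)
  also have "(\<integral>x. 2 * (\<mu> - d) * (f x - \<mu>) \<partial>P) = 0"
    using fi by (simp add: integral_diff \<mu>_def prob_space)
  finally show ?thesis by (simp add: \<mu>_def)
qed

lemma iid_avg:
  fixes \<phi> :: "'w \<Rightarrow> real" and N :: nat
  assumes M: "prob_space M" and N: "N \<ge> 1" and \<phi>: "\<phi> \<in> borel_measurable M"
    and bd: "\<And>w. w \<in> space M \<Longrightarrow> \<bar>\<phi> w\<bar> \<le> K"
  shows "(\<integral>\<omega>. ((\<Sum>b<N. \<phi> (\<omega> b)) / real N - d)\<^sup>2 \<partial>PiM {..<N} (\<lambda>_. M))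
           \<le> K\<^sup>2 / real N + (integral\<^sup>L M \<phi> - d)\<^sup>2"
proof -
  let ?P = "PiM {..<N} (\<lambda>_. M)"
  have P: "prob_space ?P" using M by (intro prob_space_PiM) auto
  interpret M: prob_space M by fact
  interpret P: prob_space ?P by (rule P)
  define \<mu> where "\<mu> = integral\<^sup>L M \<phi>"
  define \<psi> where "\<psi> w = \<phi> w - \<mu>" for w
  have \<phi>i: "integrable M \<phi>" using bnd_integrable[OF M \<phi> bd] .
  have K0: "0 \<le> K" using bd M.not_empty by (meson abs_ge_zero all_not_in_conv order_trans)
  have \<mu>b: "\<bar>\<mu>\<bar> \<le> K"
  proof -
    have "\<mu> \<le> (\<integral>x. K \<partial>M)" unfolding \<mu>_def using \<phi>i bd by (intro integral_mono) (auto simp: abs_le_iff)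
    moreover have "(\<integral>x. -K \<partial>M) \<le> \<mu>" unfolding \<mu>_def using \<phi>i
      by (intro integral_mono) (auto dest!: bd simp: abs_le_iff)
    ultimately show ?thesis by (simp add: M.prob_space)
  qed
  have \<psi>m: "\<psi> \<in> borel_measurable M" unfolding \<psi>_def using \<phi> by auto
  have \<psi>b: "\<And>w. w \<in> space M \<Longrightarrow> \<bar>\<psi> w\<bar> \<le> 2 * K" unfolding \<psi>_def using bd \<mu>b
    by (smt (verit))
  have \<psi>i: "integrable M \<psi>" using bnd_integrable[OF M \<psi>m \<psi>b] .
  have \<psi>0: "integral\<^sup>L M \<psi> = 0" unfolding \<psi>_def using \<phi>i by (simp add: \<mu>_def M.prob_space)
  have \<psi>2i: "integrable M (\<lambda>w. \<psi> w * \<psi> w)"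
    using \<psi>m \<psi>b by (intro bnd_integrable[OF M, where C="(2*K)*(2*K)"] abs_mult_le) auto
  define v where "v = (\<integral>w. \<psi> w * \<psi> w \<partial>M)"
  have vK: "v \<le> K\<^sup>2"
  proof -
    have V1: "(\<integral>x. (\<phi> x - 0)\<^sup>2 \<partial>M) = (\<integral>x. (\<phi> x - \<mu>)\<^sup>2 \<partial>M) + (\<mu> - 0)\<^sup>2"
      using var_shift[OF M \<phi> bd, of 0] by (simp add: \<mu>_def)
    have V2: "(\<integral>x. (\<phi> x - 0)\<^sup>2 \<partial>M) \<le> (\<integral>x. K\<^sup>2 \<partial>M)"
    proof (intro integral_mono)
      show "integrable M (\<lambda>x. (\<phi> x - 0)\<^sup>2)"
        using \<phi> bd K0 by (intro bnd_integrable[OF M, where C="K\<^sup>2"]) (auto intro: sq_le)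
    qed (use bd K0 in \<open>auto intro: sq_le\<close>)
    have "(\<integral>x. (\<phi> x - \<mu>)\<^sup>2 \<partial>M) \<le> K\<^sup>2" 
    proof -
      have "(\<integral>x. K\<^sup>2 \<partial>M) = K\<^sup>2" by (simp add: M.prob_space)
      with V1 V2 show ?thesis by (smt (verit) zero_le_power2)
    qed
    then show ?thesis by (simp add: v_def \<psi>_def power2_eq_square)
  qed
  have space: "\<omega> \<in> space ?P \<Longrightarrow> b < N \<Longrightarrow> \<omega> b \<in> space M" for \<omega> b
    by (auto simp: space_PiM)
  have m1: "(\<lambda>\<omega>. \<psi> (\<omega> b)) \<in> borel_measurable ?P" if "b < N" for b
  proof -
    have "b \<in> {..<N}" using that by simp
    then show ?thesis using \<psi>m by measurable
  qed
  have int1: "integrable ?P (\<lambda>\<omega>. \<psi> (\<omega> b))" if "b < N" for b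
    using m1[OF that] \<psi>b space that by (intro bnd_integrable[OF P]) auto
  have int2: "integrable ?P (\<lambda>\<omega>. \<psi> (\<omega> b) * \<psi> (\<omega> c))" if "b < N" "c < N" for b c
    using m1[OF that(1)] m1[OF that(2)] \<psi>b space that
    by (intro bnd_integrable[OF P, where C="(2*K)*(2*K)"] abs_mult_le) auto
  have e1: "(\<integral>\<omega>. \<psi> (\<omega> b) \<partial>?P) = 0" if "b < N" for b
    using iid_comp[OF M that \<psi>m] \<psi>0 by simp
  have e2: "(\<integral>\<omega>. \<psi> (\<omega> b) * \<psi> (\<omega> c) \<partial>?P) = (if b = c then v else 0)" if "b < N" "c < N" for b c
  proof (cases "b = c")
    case True
    then show ?thesis using iid_comp[OF M that(1), of "\<lambda>w. \<psi> w * \<psi> w"] \<psi>m by (simp add: v_def)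
  next
    case False
    then show ?thesis using iid_pair[OF M that False \<psi>i \<psi>i] \<psi>0 by simp
  qed
  have Npos: "real N > 0" using N by simp
  have pt: "((\<Sum>b<N. \<phi> (\<omega> b)) / real N - d)\<^sup>2
      = (\<Sum>b<N. \<Sum>c<N. \<psi> (\<omega> b) * \<psi> (\<omega> c)) / (real N)\<^sup>2
        + 2 * (\<mu> - d) / real N * (\<Sum>b<N. \<psi> (\<omega> b)) + (\<mu> - d)\<^sup>2" for \<omega>
  proof -
    have A: "(\<Sum>b<N. \<psi> (\<omega> b)) = (\<Sum>b<N. \<phi> (\<omega> b)) - real N * \<mu>"
      by (simp add: \<psi>_def sum_subtractf)
    have B: "(\<Sum>b<N. \<Sum>c<N. \<psi> (\<omega> b) * \<psi> (\<omega> c)) = (\<Sum>b<N. \<psi> (\<omega> b)) * (\<Sum>b<N. \<psi> (\<omega> b))"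
      by (simp add: sum_product)
    show ?thesis unfolding B A using Npos
      by (simp add: field_simps power2_eq_square)
  qed
  have "(\<integral>\<omega>. ((\<Sum>b<N. \<phi> (\<omega> b)) / real N - d)\<^sup>2 \<partial>?P)
      = (\<integral>\<omega>. (\<Sum>b<N. \<Sum>c<N. \<psi> (\<omega> b) * \<psi> (\<omega> c)) / (real N)\<^sup>2
        + 2 * (\<mu> - d) / real N * (\<Sum>b<N. \<psi> (\<omega> b)) + (\<mu> - d)\<^sup>2 \<partial>?P)"
    by (simp only: pt)
  also have "\<dots> = (\<Sum>b<N. \<Sum>c<N. (\<integral>\<omega>. \<psi> (\<omega> b) * \<psi> (\<omega> c) \<partial>?P)) / (real N)\<^sup>2
        + 2 * (\<mu> - d) / real N * (\<Sum>b<N. (\<integral>\<omega>. \<psi> (\<omega> b) \<partial>?P)) + (\<mu> - d)\<^sup>2"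
  proof -
    define A where "A \<omega> = (\<Sum>b<N. \<Sum>c<N. \<psi> (\<omega> b) * \<psi> (\<omega> c))" for \<omega>
    define B where "B \<omega> = (\<Sum>b<N. \<psi> (\<omega> b))" for \<omega>
    have iA: "integrable ?P A" unfolding A_def using int2 by (intro Bochner_Integration.integrable_sum) (auto intro!: Bochner_Integration.integrable_sum)
    have iB: "integrable ?P B" unfolding B_def using int1 by (intro Bochner_Integration.integrable_sum) auto
    have IA: "integral\<^sup>L ?P A = (\<Sum>b<N. \<Sum>c<N. (\<integral>\<omega>. \<psi> (\<omega> b) * \<psi> (\<omega> c) \<partial>?P))"
      unfolding A_def
    proof (subst Bochner_Integration.integral_sum)
      show "\<And>b. b \<in> {..<N} \<Longrightarrow> integrable ?P (\<lambda>\<omega>. \<Sum>c<N. \<psi> (\<omega> b) * \<psi> (\<omega> c))"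
        using int2 by (auto intro!: Bochner_Integration.integrable_sum)
      show "(\<Sum>b<N. (\<integral>\<omega>. (\<Sum>c<N. \<psi> (\<omega> b) * \<psi> (\<omega> c)) \<partial>?P)) = (\<Sum>b<N. \<Sum>c<N. (\<integral>\<omega>. \<psi> (\<omega> b) * \<psi> (\<omega> c) \<partial>?P))"
        using int2 by (intro sum.cong refl Bochner_Integration.integral_sum) auto
    qed
    have IB: "integral\<^sup>L ?P B = (\<Sum>b<N. (\<integral>\<omega>. \<psi> (\<omega> b) \<partial>?P))"
      unfolding B_def using int1 by (simp add: integral_sum)
    have "(\<integral>\<omega>. A \<omega> / (real N)\<^sup>2 + 2 * (\<mu> - d) / real N * B \<omega> + (\<mu> - d)\<^sup>2 \<partial>?P)
        = (\<integral>\<omega>. A \<omega> / (real N)\<^sup>2 + 2 * (\<mu> - d) / real N * B \<omega> \<partial>?P) + (\<integral>\<omega>. (\<mu> - d)\<^sup>2 \<partial>?P)"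
      using iA iB by (intro Bochner_Integration.integral_add) auto
    also have "(\<integral>\<omega>. A \<omega> / (real N)\<^sup>2 + 2 * (\<mu> - d) / real N * B \<omega> \<partial>?P)
        = (\<integral>\<omega>. A \<omega> / (real N)\<^sup>2 \<partial>?P) + (\<integral>\<omega>. 2 * (\<mu> - d) / real N * B \<omega> \<partial>?P)"
      using iA iB by (intro Bochner_Integration.integral_add) auto
    also have "(\<integral>\<omega>. A \<omega> / (real N)\<^sup>2 \<partial>?P) = integral\<^sup>L ?P A / (real N)\<^sup>2" by simp
    also have "(\<integral>\<omega>. 2 * (\<mu> - d) / real N * B \<omega> \<partial>?P) = 2 * (\<mu> - d) / real N * integral\<^sup>L ?P B" by simp
    also have "(\<integral>\<omega>. (\<mu> - d)\<^sup>2 \<partial>?P) = (\<mu> - d)\<^sup>2" using prob_space.prob_space[OF P] by simp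
    finally have F: "(\<integral>\<omega>. A \<omega> / (real N)\<^sup>2 + 2 * (\<mu> - d) / real N * B \<omega> + (\<mu> - d)\<^sup>2 \<partial>?P)
       = integral\<^sup>L ?P A / (real N)\<^sup>2 + 2 * (\<mu> - d) / real N * integral\<^sup>L ?P B + (\<mu> - d)\<^sup>2" .
    show ?thesis using F unfolding IA IB by (simp add: A_def B_def)
  qed
  also have "\<dots> = (\<Sum>b<N. \<Sum>c<N. (if b = c then v else 0)) / (real N)\<^sup>2 + (\<mu> - d)\<^sup>2"
    using e1 e2 by simp
  also have "(\<Sum>b<N. \<Sum>c<N. (if b = c then v else 0)) = real N * v"
    by simp
  also have "real N * v / (real N)\<^sup>2 = v / real N"
    using Npos by (simp add: power2_eq_square)
  also have "v / real N \<le> K\<^sup>2 / real N"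
    using vK Npos by (simp add: divide_right_mono)
  finally show ?thesis by (simp add: \<mu>_def)
qed




lemma wavg_bound:
  fixes w y :: "nat \<Rightarrow> real"
  assumes "\<forall>i<n. 0 \<le> w i" "(\<Sum>i<n. w i) = 1" "\<forall>i<n. \<bar>y i\<bar> \<le> m"
  shows "\<bar>\<Sum>i<n. w i * y i\<bar> \<le> m"
proof -
  have "\<bar>\<Sum>i<n. w i * y i\<bar> \<le> (\<Sum>i<n. \<bar>w i * y i\<bar>)" by (rule sum_abs)
  also have "\<dots> \<le> (\<Sum>i<n. w i * m)"
    using assms by (intro sum_mono) (auto simp: abs_mult intro: mult_left_mono)
  also have "\<dots> = m" using assms(2) by (simp add: sum_distrib_right[symmetric])
  finally show ?thesis .
qed

lemma wavg2_bound:
  fixes w y :: "nat \<Rightarrow> nat \<Rightarrow> real"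
  assumes "\<forall>i<n. \<forall>j<n. 0 \<le> w i j" "(\<Sum>i<n. \<Sum>j<n. w i j) = 1" "\<forall>i<n. \<forall>j<n. \<bar>y i j\<bar> \<le> m"
  shows "\<bar>\<Sum>i<n. \<Sum>j<n. w i j * y i j\<bar> \<le> m"
proof -
  have "\<bar>\<Sum>i<n. \<Sum>j<n. w i j * y i j\<bar> \<le> (\<Sum>i<n. \<bar>\<Sum>j<n. w i j * y i j\<bar>)" by (rule sum_abs)
  also have "\<dots> \<le> (\<Sum>i<n. \<Sum>j<n. \<bar>w i j * y i j\<bar>)" by (intro sum_mono sum_abs)
  also have "\<dots> \<le> (\<Sum>i<n. \<Sum>j<n. w i j * m)"
    using assms by (intro sum_mono) (auto simp: abs_mult intro: mult_left_mono)
  also have "\<dots> = m" using assms(2) by (simp add: sum_distrib_right[symmetric])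
  finally show ?thesis .
qed

lemma avg_bound:
  fixes t :: "nat \<Rightarrow> real"
  assumes "B \<ge> 1" "\<forall>b<B. \<bar>t b\<bar> \<le> m"
  shows "\<bar>(\<Sum>b<B. t b) / real B\<bar> \<le> m"
proof -
  have "\<bar>\<Sum>b<B. t b\<bar> \<le> (\<Sum>b<B. \<bar>t b\<bar>)" by (rule sum_abs)
  also have "\<dots> \<le> (\<Sum>b<B. m)" using assms by (intro sum_mono) auto
  finally have "\<bar>\<Sum>b<B. t b\<bar> \<le> real B * m" by simp
  then show ?thesis using assms(1) by (simp add: field_simps)
qed

lemma swap_avg:
  fixes c :: "nat \<Rightarrow> nat \<Rightarrow> real" and t :: "nat \<Rightarrow> nat \<Rightarrow> real"
  shows "(\<Sum>i<n. \<Sum>j<n. c i j * ((\<Sum>b<B. t i b) / real B - (\<Sum>b<B. t j b) / real B))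
   = (\<Sum>b<B. \<Sum>i<n. \<Sum>j<n. c i j * (t i b - t j b)) / real B"
proof -
  have "(\<Sum>b<B. \<Sum>i<n. \<Sum>j<n. c i j * (t i b - t j b)) = (\<Sum>i<n. \<Sum>b<B. \<Sum>j<n. c i j * (t i b - t j b))"
    by (rule sum.swap)
  also have "\<dots> = (\<Sum>i<n. \<Sum>j<n. \<Sum>b<B. c i j * (t i b - t j b))"
    by (intro sum.cong refl sum.swap)
  also have "\<dots> = (\<Sum>i<n. \<Sum>j<n. c i j * ((\<Sum>b<B. t i b) - (\<Sum>b<B. t j b)))"
    by (simp add: sum_distrib_left[symmetric] sum_subtractf)
  finally have 1: "(\<Sum>b<B. \<Sum>i<n. \<Sum>j<n. c i j * (t i b - t j b)) / real B = (\<Sum>i<n. \<Sum>j<n. c i j * ((\<Sum>b<B. t i b) - (\<Sum>b<B. t j b))) / real B" by simp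
  have 2: "(\<Sum>i<n. \<Sum>j<n. c i j * ((\<Sum>b<B. t i b) / real B - (\<Sum>b<B. t j b) / real B))
     = (\<Sum>i<n. \<Sum>j<n. c i j * ((\<Sum>b<B. t i b) - (\<Sum>b<B. t j b)) / real B)"
    by (intro sum.cong refl) (simp add: diff_divide_distrib[symmetric])
  show ?thesis unfolding 1 2 by (simp add: sum_divide_distrib)
qed



lemma rand_bound:
  fixes Y :: "nat \<Rightarrow> real" and x :: 'a and m :: real
    and Q :: "'w measure" and Qo :: "'v measure"
    and W :: "'a \<Rightarrow> (nat \<Rightarrow> real) \<Rightarrow> 'w \<Rightarrow> nat \<Rightarrow> real"
    and V :: "'a \<Rightarrow> (nat \<Rightarrow> real) \<Rightarrow> 'v \<Rightarrow> nat \<Rightarrow> nat \<Rightarrow> real"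
  assumes B: "B \<ge> 1" and Bo: "Bo \<ge> 1" and Q: "prob_space Q" and Qo: "prob_space Qo"
    and Wm[measurable]: "\<And>z i. (\<lambda>w. W z Y w i) \<in> borel_measurable Q"
    and Vm[measurable]: "\<And>z i j. (\<lambda>w. V z Y w i j) \<in> borel_measurable Qo"
    and W_wt: "\<forall>z y w. (\<forall>i<n. 0 \<le> W z y w i \<and> W z y w i \<le> 1) \<and> (\<Sum>i<n. W z y w i) = 1"
    and V_wt: "\<forall>z y w. (\<forall>i<n. \<forall>j<n. 0 \<le> V z y w i j \<and> V z y w i j \<le> 1)
                        \<and> (\<Sum>i<n. \<Sum>j<n. V z y w i j) = 1"
    and Yb: "\<forall>i<n. \<bar>Y i\<bar> \<le> m"
  shows "(\<integral>r. (bc_ens n X W V B Bo Y (fst r) (snd r) x - bc_inf n X W V B Bo Q Qo Y x)\<^sup>2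
            \<partial>rand_measure B Bo Q Qo) \<le> (16 / real B + 9 / real Bo) * m\<^sup>2"
proof -
  let ?P1 = "PiM {..<B} (\<lambda>_. Q)" and ?P2 = "PiM {..<Bo} (\<lambda>_. Qo)"
  let ?R = "rand_measure B Bo Q Qo"
  have P1: "prob_space ?P1" using Q by (intro prob_space_PiM) auto
  have P2: "prob_space ?P2" using Qo by (intro prob_space_PiM) auto
  interpret Q: prob_space Q by fact
  interpret Qo: prob_space Qo by fact
  interpret P12: pair_prob_space ?P1 ?P2
    using P1 P2 by (simp add: pair_prob_space_def pair_sigma_finite_def prob_space_imp_sigma_finite)
  have R: "prob_space ?R" unfolding rand_measure_def using P1 P2 by (rule prob_space_pair)
  have Rdef: "?R = ?P1 \<Otimes>\<^sub>M ?P2" by (simp add: rand_measure_def)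
  have n: "n \<ge> 1"
  proof (rule ccontr)
    assume "\<not> n \<ge> 1" then have "n = 0" by simp
    then show False using W_wt by auto
  qed
  have m0: "0 \<le> m" using Yb n by (meson abs_ge_zero less_le_trans order_trans zero_less_one le_trans less_eq_Suc_le)
  define T where "T z w = (\<Sum>i<n. W z Y w i * Y i)" for z w
  define E where "E \<Omega>s z = (\<Sum>b<B. T z (\<Omega>s b)) / real B" for \<Omega>s :: "nat \<Rightarrow> 'w" and z
  define Rt where "Rt \<Omega>s \<nu> = (\<Sum>i<n. \<Sum>j<n. V x Y \<nu> i j * (E \<Omega>s (X i) + (Y j - E \<Omega>s (X j))))" for \<Omega>s \<nu>
  have ensE: "ens n W B Y \<Omega>s z = E \<Omega>s z" for \<Omega>s z
    unfolding ens_def E_def T_def by (simp add: sum_divide_distrib)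
  have bcE: "bc_ens n X W V B Bo Y \<Omega>s \<Omega>os x = 2 * E \<Omega>s x - (\<Sum>b<Bo. Rt \<Omega>s (\<Omega>os b)) / real Bo" for \<Omega>s \<Omega>os
    unfolding bc_ens_def res_ens_def Rt_def ensE ..
  have Tb: "\<bar>T z w\<bar> \<le> m" for z w
    unfolding T_def using W_wt Yb by (intro wavg_bound) auto
  have Eb: "\<bar>E \<Omega>s z\<bar> \<le> m" for \<Omega>s z
    unfolding E_def using Tb B by (intro avg_bound) auto
  have Rtb: "\<bar>Rt \<Omega>s \<nu>\<bar> \<le> 3 * m" for \<Omega>s \<nu>
    unfolding Rt_def
  proof (intro wavg2_bound)
    show "\<forall>i<n. \<forall>j<n. \<bar>E \<Omega>s (X i) + (Y j - E \<Omega>s (X j))\<bar> \<le> 3 * m"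
    proof (intro allI impI)
      fix i j assume "i < n" "j < n"
      then have "\<bar>E \<Omega>s (X i)\<bar> \<le> m" "\<bar>E \<Omega>s (X j)\<bar> \<le> m" "\<bar>Y j\<bar> \<le> m" using Eb Yb by auto
      then show "\<bar>E \<Omega>s (X i) + (Y j - E \<Omega>s (X j))\<bar> \<le> 3 * m" by linarith
    qed
  qed (use V_wt in auto)
  have bcb: "\<bar>bc_ens n X W V B Bo Y \<Omega>s \<Omega>os x\<bar> \<le> 5 * m" for \<Omega>s \<Omega>os
  proof -
    have "\<bar>(\<Sum>b<Bo. Rt \<Omega>s (\<Omega>os b)) / real Bo\<bar> \<le> 3 * m" using Rtb Bo by (intro avg_bound) auto
    then show ?thesis unfolding bcE using Eb[of \<Omega>s x] by linarith
  qed
  have bcm: "(\<lambda>r. bc_ens n X W V B Bo Y (fst r) (snd r) x) \<in> borel_measurable ?R"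
    unfolding rand_measure_def bc_ens_def res_ens_def ens_def by measurable
  have bcb': "\<And>r. r \<in> space ?R \<Longrightarrow> \<bar>bc_ens n X W V B Bo Y (fst r) (snd r) x\<bar> \<le> 5 * m"
    using bcb by auto
  have Vi: "integrable Qo (\<lambda>\<nu>. V x Y \<nu> i j)" if "i < n" "j < n" for i j
  proof (rule bnd_integrable[OF Qo, where C=1])
    fix \<nu> show "\<bar>V x Y \<nu> i j\<bar> \<le> 1" using V_wt that by auto
  qed simp
  define c where "c i j = (\<integral>\<nu>. V x Y \<nu> i j \<partial>Qo)" for i j
  have c0: "\<forall>i<n. \<forall>j<n. 0 \<le> c i j" unfolding c_def using V_wt by (auto intro!: integral_nonneg)
  have c1: "(\<Sum>i<n. \<Sum>j<n. c i j) = 1"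
  proof -
    have "(\<Sum>i<n. \<Sum>j<n. c i j) = (\<Sum>i<n. (\<integral>\<nu>. (\<Sum>j<n. V x Y \<nu> i j) \<partial>Qo))"
      unfolding c_def using Vi by (intro sum.cong refl Bochner_Integration.integral_sum[symmetric]) auto
    also have "\<dots> = (\<integral>\<nu>. (\<Sum>i<n. \<Sum>j<n. V x Y \<nu> i j) \<partial>Qo)"
      using Vi by (intro Bochner_Integration.integral_sum[symmetric]) auto
    also have "\<dots> = (\<integral>\<nu>. 1 \<partial>Qo)" using V_wt by simp
    finally show ?thesis by (simp add: Qo.prob_space)
  qed
  define g where "g w = (\<Sum>i<n. \<Sum>j<n. c i j * (T (X i) w - T (X j) w)) - 2 * T x w" for w
  have gm: "g \<in> borel_measurable Q" unfolding g_def T_def by measurable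
  have gb: "\<bar>g w\<bar> \<le> 4 * m" for w
  proof -
    have "\<bar>\<Sum>i<n. \<Sum>j<n. c i j * (T (X i) w - T (X j) w)\<bar> \<le> 2 * m"
    proof (intro wavg2_bound[OF c0 c1] allI impI)
      fix i j show "\<bar>T (X i) w - T (X j) w\<bar> \<le> 2 * m" using Tb[of "X i" w] Tb[of "X j" w] by linarith
    qed
    then show ?thesis unfolding g_def using Tb[of x w] by linarith
  qed
  define d where "d = - (\<Sum>i<n. \<Sum>j<n. c i j * Y j) - integral\<^sup>L Q g"
  have Rtm: "(\<lambda>\<nu>. Rt \<Omega>s \<nu>) \<in> borel_measurable Qo" for \<Omega>s
    unfolding Rt_def by measurable
  have intRt: "(\<integral>\<nu>. Rt \<Omega>s \<nu> \<partial>Qo) = (\<Sum>i<n. \<Sum>j<n. c i j * (E \<Omega>s (X i) + (Y j - E \<Omega>s (X j))))" for \<Omega>s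
    unfolding Rt_def c_def using Vi
    by (subst Bochner_Integration.integral_sum) (auto intro!: sum.cong Bochner_Integration.integral_sum)
  have key: "(\<Sum>i<n. \<Sum>j<n. c i j * (E \<Omega>s (X i) + (Y j - E \<Omega>s (X j)))) - (2 * E \<Omega>s x - d)
      = (\<Sum>b<B. g (\<Omega>s b)) / real B - integral\<^sup>L Q g" for \<Omega>s
  proof -
    have s1: "(\<Sum>i<n. \<Sum>j<n. c i j * (E \<Omega>s (X i) + (Y j - E \<Omega>s (X j))))
        = (\<Sum>i<n. \<Sum>j<n. c i j * (E \<Omega>s (X i) - E \<Omega>s (X j))) + (\<Sum>i<n. \<Sum>j<n. c i j * Y j)"
    proof -
      have "(\<Sum>i<n. \<Sum>j<n. c i j * (E \<Omega>s (X i) + (Y j - E \<Omega>s (X j))))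
        = (\<Sum>i<n. \<Sum>j<n. c i j * (E \<Omega>s (X i) - E \<Omega>s (X j)) + c i j * Y j)"
        by (intro sum.cong refl) (simp add: algebra_simps)
      then show ?thesis by (simp add: sum.distrib)
    qed
    have s2: "(\<Sum>i<n. \<Sum>j<n. c i j * (E \<Omega>s (X i) - E \<Omega>s (X j)))
        = (\<Sum>b<B. \<Sum>i<n. \<Sum>j<n. c i j * (T (X i) (\<Omega>s b) - T (X j) (\<Omega>s b))) / real B"
      using swap_avg[where c=c and t="\<lambda>i b. T (X i) (\<Omega>s b)" and n=n and B=B] unfolding E_def by simp
    have s3: "2 * E \<Omega>s x = (\<Sum>b<B. 2 * T x (\<Omega>s b)) / real B"
      unfolding E_def by (simp add: sum_distrib_left)
    have s4: "(\<Sum>b<B. g (\<Omega>s b)) = (\<Sum>b<B. \<Sum>i<n. \<Sum>j<n. c i j * (T (X i) (\<Omega>s b) - T (X j) (\<Omega>s b)))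
          - (\<Sum>b<B. 2 * T x (\<Omega>s b))"
      unfolding g_def by (simp add: sum_subtractf)
    show ?thesis unfolding s1 s2 s3 s4 d_def by (simp add: diff_divide_distrib)
  qed
  have inner: "(\<integral>\<Omega>os. (bc_ens n X W V B Bo Y \<Omega>s \<Omega>os x - d)\<^sup>2 \<partial>?P2)
       \<le> 9 * m\<^sup>2 / real Bo + ((\<Sum>b<B. g (\<Omega>s b)) / real B - integral\<^sup>L Q g)\<^sup>2" for \<Omega>s
  proof -
    have "(\<integral>\<Omega>os. (bc_ens n X W V B Bo Y \<Omega>s \<Omega>os x - d)\<^sup>2 \<partial>?P2)
        = (\<integral>\<Omega>os. ((\<Sum>b<Bo. Rt \<Omega>s (\<Omega>os b)) / real Bo - (2 * E \<Omega>s x - d))\<^sup>2 \<partial>?P2)"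
      unfolding bcE by (intro Bochner_Integration.integral_cong refl) (simp add: power2_eq_square algebra_simps)
    also have "\<dots> \<le> (3 * m)\<^sup>2 / real Bo + ((\<integral>\<nu>. Rt \<Omega>s \<nu> \<partial>Qo) - (2 * E \<Omega>s x - d))\<^sup>2"
      using Rtb by (intro iid_avg[OF Qo Bo Rtm]) auto
    finally show ?thesis unfolding intRt key by (simp add: power_mult_distrib)
  qed
  let ?f = "\<lambda>r. bc_ens n X W V B Bo Y (fst r) (snd r) x"
  have infdef: "bc_inf n X W V B Bo Q Qo Y x = integral\<^sup>L ?R ?f"
    by (simp add: bc_inf_def)
  have step1: "(\<integral>r. (?f r - bc_inf n X W V B Bo Q Qo Y x)\<^sup>2 \<partial>?R) \<le> (\<integral>r. (?f r - d)\<^sup>2 \<partial>?R)"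
    unfolding infdef using var_shift[OF R bcm bcb', of d] by simp
  have prodint: "integrable (?P1 \<Otimes>\<^sub>M ?P2) (\<lambda>(a, b). (bc_ens n X W V B Bo Y a b x - d)\<^sup>2)"
  proof -
    have "integrable ?R (\<lambda>r. (?f r - d)\<^sup>2)"
    proof (rule bnd_integrable[OF R, where C="(5 * m + \<bar>d\<bar>)\<^sup>2"])
      show "(\<lambda>r. (?f r - d)\<^sup>2) \<in> borel_measurable ?R" using bcm by measurable
      fix r assume "r \<in> space ?R"
      then have "\<bar>?f r - d\<bar> \<le> 5 * m + \<bar>d\<bar>" using bcb'[of r] by linarith
      then show "\<bar>(?f r - d)\<^sup>2\<bar> \<le> (5 * m + \<bar>d\<bar>)\<^sup>2" using sq_le by simp
    qed
    then show ?thesis unfolding Rdef by (simp add: split_beta')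
  qed
  have fub: "(\<integral>r. (?f r - d)\<^sup>2 \<partial>?R) = (\<integral>\<Omega>s. (\<integral>\<Omega>os. (bc_ens n X W V B Bo Y \<Omega>s \<Omega>os x - d)\<^sup>2 \<partial>?P2) \<partial>?P1)"
    using P12.integral_fst[OF prodint] unfolding Rdef by (simp add: split_beta')
  have inner_int: "integrable ?P1 (\<lambda>\<Omega>s. (\<integral>\<Omega>os. (bc_ens n X W V B Bo Y \<Omega>s \<Omega>os x - d)\<^sup>2 \<partial>?P2))"
    using P12.integrable_fst[OF prodint] by simp
  have gsb: "\<bar>(\<Sum>b<B. g (\<Omega>s b)) / real B - integral\<^sup>L Q g\<bar> \<le> 8 * m" for \<Omega>s
  proof -
    have "\<bar>(\<Sum>b<B. g (\<Omega>s b)) / real B\<bar> \<le> 4 * m" using gb B by (intro avg_bound) auto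
    moreover have "\<bar>integral\<^sup>L Q g\<bar> \<le> 4 * m"
    proof -
      have "\<bar>integral\<^sup>L Q g\<bar> \<le> (\<integral>w. \<bar>g w\<bar> \<partial>Q)" by (rule integral_abs_bound)
      also have "\<dots> \<le> (\<integral>w. 4 * m \<partial>Q)" using gb gm m0
        by (intro integral_mono bnd_integrable[OF Q, where C="4*m"]) auto
      finally show ?thesis by (simp add: Q.prob_space)
    qed
    ultimately show ?thesis by linarith
  qed
  have rhs_int: "integrable ?P1 (\<lambda>\<Omega>s. 9 * m\<^sup>2 / real Bo + ((\<Sum>b<B. g (\<Omega>s b)) / real B - integral\<^sup>L Q g)\<^sup>2)"
  proof (rule bnd_integrable[OF P1, where C="9 * m\<^sup>2 / real Bo + (8 * m)\<^sup>2"])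
    show "(\<lambda>\<Omega>s. 9 * m\<^sup>2 / real Bo + ((\<Sum>b<B. g (\<Omega>s b)) / real B - integral\<^sup>L Q g)\<^sup>2) \<in> borel_measurable ?P1"
      using gm by measurable
    fix \<Omega>s
    have "((\<Sum>b<B. g (\<Omega>s b)) / real B - integral\<^sup>L Q g)\<^sup>2 \<le> (8 * m)\<^sup>2" using sq_le[OF gsb] .
    then show "\<bar>9 * m\<^sup>2 / real Bo + ((\<Sum>b<B. g (\<Omega>s b)) / real B - integral\<^sup>L Q g)\<^sup>2\<bar> \<le> 9 * m\<^sup>2 / real Bo + (8 * m)\<^sup>2"
      by simp
  qed
  have "(\<integral>\<Omega>s. (\<integral>\<Omega>os. (bc_ens n X W V B Bo Y \<Omega>s \<Omega>os x - d)\<^sup>2 \<partial>?P2) \<partial>?P1)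
      \<le> (\<integral>\<Omega>s. 9 * m\<^sup>2 / real Bo + ((\<Sum>b<B. g (\<Omega>s b)) / real B - integral\<^sup>L Q g)\<^sup>2 \<partial>?P1)"
    using inner_int rhs_int inner by (intro integral_mono) auto
  also have "\<dots> = 9 * m\<^sup>2 / real Bo + (\<integral>\<Omega>s. ((\<Sum>b<B. g (\<Omega>s b)) / real B - integral\<^sup>L Q g)\<^sup>2 \<partial>?P1)"
  proof -
    have i2: "integrable ?P1 (\<lambda>\<Omega>s. ((\<Sum>b<B. g (\<Omega>s b)) / real B - integral\<^sup>L Q g)\<^sup>2)"
    proof (rule bnd_integrable[OF P1, where C="(8*m)\<^sup>2"])
      show "(\<lambda>\<Omega>s. ((\<Sum>b<B. g (\<Omega>s b)) / real B - integral\<^sup>L Q g)\<^sup>2) \<in> borel_measurable ?P1"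
        using gm by measurable
      fix \<Omega>s show "\<bar>((\<Sum>b<B. g (\<Omega>s b)) / real B - integral\<^sup>L Q g)\<^sup>2\<bar> \<le> (8*m)\<^sup>2"
        using sq_le[OF gsb] by simp
    qed
    interpret P1': prob_space ?P1 by (rule P1)
    show ?thesis using i2 by (simp add: Bochner_Integration.integral_add prob_space.prob_space[OF P1])
  qed
  also have "(\<integral>\<Omega>s. ((\<Sum>b<B. g (\<Omega>s b)) / real B - integral\<^sup>L Q g)\<^sup>2 \<partial>?P1) \<le> (4 * m)\<^sup>2 / real B + (integral\<^sup>L Q g - integral\<^sup>L Q g)\<^sup>2"
    using gb by (intro iid_avg[OF Q B gm]) auto
  finally have "(\<integral>r. (?f r - d)\<^sup>2 \<partial>?R) \<le> 9 * m\<^sup>2 / real Bo + 16 * m\<^sup>2 / real B"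
    unfolding fub by (simp add: power_mult_distrib)
  with step1 show ?thesis by (simp add: algebra_simps add_divide_distrib)
qed




lemma iid_comp_int:
  fixes g :: "'w \<Rightarrow> real" and N :: nat
  assumes M: "prob_space M" and b: "b < N" and g: "g \<in> borel_measurable M" and gi: "integrable M g"
  shows "integrable (PiM {..<N} (\<lambda>_. M)) (\<lambda>\<omega>. g (\<omega> b))"
proof -
  have "distr (PiM {..<N} (\<lambda>_. M)) M (\<lambda>\<omega>. \<omega> b) = M"
    using distr_PiM_component[of "{..<N}" "\<lambda>_. M" b] M b by auto
  then have "integrable (distr (PiM {..<N} (\<lambda>_. M)) M (\<lambda>\<omega>. \<omega> b)) g" using gi by simp
  then show ?thesis using b g by (subst (asm) integrable_distr_eq) auto
qed

lemma gauss_pt: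
  fixes \<sigma> x :: real
  assumes s: "\<sigma> > 0"
  shows "normal_density 0 \<sigma> x * exp (x\<^sup>2 / (4 * \<sigma>\<^sup>2)) = sqrt 2 * normal_density 0 (sqrt 2 * \<sigma>) x"
proof -
  have e: "exp (- x\<^sup>2 / (2 * \<sigma>\<^sup>2)) * exp (x\<^sup>2 / (4 * \<sigma>\<^sup>2)) = exp (- x\<^sup>2 / (4 * \<sigma>\<^sup>2))"
  proof -
    have "- x\<^sup>2 / (2 * \<sigma>\<^sup>2) + x\<^sup>2 / (4 * \<sigma>\<^sup>2) = - x\<^sup>2 / (4 * \<sigma>\<^sup>2)" using s by (simp add: field_simps)
    then show ?thesis by (simp add: exp_add[symmetric])
  qed
  have sq: "(sqrt 2 * \<sigma>)\<^sup>2 = 2 * \<sigma>\<^sup>2" by (simp add: power_mult_distrib)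
  have r: "sqrt (2 * pi * (2 * \<sigma>\<^sup>2)) = sqrt 2 * sqrt (2 * pi * \<sigma>\<^sup>2)"
    by (simp add: real_sqrt_mult[symmetric] algebra_simps)
  have pos: "sqrt (2 * pi * \<sigma>\<^sup>2) > 0" using s by simp
  show ?thesis
    unfolding normal_density_def sq r using e pos
    by (simp add: field_simps)
qed

lemma gauss_exp:
  fixes \<sigma> :: real
  assumes s: "\<sigma> > 0"
  shows "integrable (density lborel (normal_density 0 \<sigma>)) (\<lambda>x. exp (x\<^sup>2 / (4 * \<sigma>\<^sup>2)))"
    and "(\<integral>x. exp (x\<^sup>2 / (4 * \<sigma>\<^sup>2)) \<partial>density lborel (normal_density 0 \<sigma>)) = sqrt 2"
proof -
  have eq: "(\<lambda>x. normal_density 0 \<sigma> x *\<^sub>R exp (x\<^sup>2 / (4 * \<sigma>\<^sup>2))) = (\<lambda>x. sqrt 2 * normal_density 0 (sqrt 2 * \<sigma>) x)"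
    using gauss_pt[OF s] by auto
  have eq2: "(\<lambda>x. normal_density 0 \<sigma> x * exp (x\<^sup>2 / (4 * \<sigma>\<^sup>2))) = (\<lambda>x. sqrt 2 * normal_density 0 (sqrt 2 * \<sigma>) x)"
    using gauss_pt[OF s] by auto
  have "integrable lborel (\<lambda>x. sqrt 2 * normal_density 0 (sqrt 2 * \<sigma>) x)" by (intro integrable_mult_right integrable_normal_density) (simp add: s)
  then have I: "integrable lborel (\<lambda>x. normal_density 0 \<sigma> x * exp (x\<^sup>2 / (4 * \<sigma>\<^sup>2)))" unfolding eq2 .
  then show "integrable (density lborel (normal_density 0 \<sigma>)) (\<lambda>x. exp (x\<^sup>2 / (4 * \<sigma>\<^sup>2)))"
    by (subst integrable_density) auto
  have "(\<integral>x. exp (x\<^sup>2 / (4 * \<sigma>\<^sup>2)) \<partial>density lborel (normal_density 0 \<sigma>))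
      = (\<integral>x. sqrt 2 * normal_density 0 (sqrt 2 * \<sigma>) x \<partial>lborel)"
    by (subst integral_density) (auto simp: eq2)
  also have "\<dots> = sqrt 2" using integral_normal_density[where \<sigma>="sqrt 2 * \<sigma>" and \<mu>=0] s by simp
  finally show "(\<integral>x. exp (x\<^sup>2 / (4 * \<sigma>\<^sup>2)) \<partial>density lborel (normal_density 0 \<sigma>)) = sqrt 2" .
qed

lemma gauss_max:
  fixes \<sigma> :: real and n :: nat
  assumes s: "\<sigma> > 0" and n: "n \<ge> 1"
  shows "integrable (PiM {..<n} (\<lambda>_. density lborel (normal_density 0 \<sigma>))) (\<lambda>e. Max ((\<lambda>i. (e i)\<^sup>2) ` {..<n}))"
    and "(\<integral>e. Max ((\<lambda>i. (e i)\<^sup>2) ` {..<n}) \<partial>PiM {..<n} (\<lambda>_. density lborel (normal_density 0 \<sigma>)))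
           \<le> \<sigma>\<^sup>2 * (4 * ln (real n) + 2 * ln 2)"
proof -
  define G where "G = density lborel (normal_density 0 \<sigma>)"
  let ?N = "PiM {..<n} (\<lambda>_. G)"
  define Me where "Me e = Max ((\<lambda>i. (e i)\<^sup>2) ` {..<n})" for e :: "nat \<Rightarrow> real"
  have PG: "prob_space G" unfolding G_def using prob_space_normal_density s by blast
  have PN: "prob_space ?N" using PG by (intro prob_space_PiM) auto
  interpret PN: prob_space ?N by (rule PN)
  define q where "q = 4 * \<sigma>\<^sup>2"
  have q: "q > 0" unfolding q_def using s by simp
  define h where "h x = exp (x\<^sup>2 / q)" for x :: real
  have hm: "h \<in> borel_measurable G" unfolding h_def G_def by measurable
  have hi: "integrable G h" unfolding h_def G_def q_def using gauss_exp(1)[OF s] .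
  have hI: "integral\<^sup>L G h = sqrt 2" unfolding h_def G_def q_def using gauss_exp(2)[OF s] .
  define S where "S e = (\<Sum>i<n. h (e i))" for e :: "nat \<Rightarrow> real"
  have hii: "integrable ?N (\<lambda>e. h (e i))" if "i < n" for i
    using iid_comp_int[OF PG that hm hi] .
  have Si: "integrable ?N S" unfolding S_def using hii by (intro Bochner_Integration.integrable_sum) auto
  have SI: "integral\<^sup>L ?N S = real n * sqrt 2"
  proof -
    have "integral\<^sup>L ?N S = (\<Sum>i<n. (\<integral>e. h (e i) \<partial>?N))"
      unfolding S_def using hii by (intro Bochner_Integration.integral_sum) auto
    also have "\<dots> = (\<Sum>i<n. sqrt 2)" using iid_comp[OF PG _ hm] hI by simp
    finally show ?thesis by simp
  qed
  have comp: "(\<lambda>x. x i) \<in> borel_measurable ?N" if "i \<in> {..<n}" for i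
  proof -
    have "(\<lambda>x. x i) \<in> measurable ?N G" using that by (rule measurable_component_singleton)
    moreover have "sets G = sets borel" unfolding G_def by simp
    ultimately show ?thesis using measurable_cong_sets[OF refl, of G borel] by blast
  qed
  have Mem: "Me \<in> borel_measurable ?N" unfolding Me_def
    by (intro borel_measurable_Max finite_lessThan borel_measurable_power comp)
  have Mex: "\<exists>k<n. Me e = (e k)\<^sup>2" for e
  proof -
    have "Me e \<in> (\<lambda>i. (e i)\<^sup>2) ` {..<n}" unfolding Me_def using n by (intro Max_in) (auto simp: lessThan_empty_iff)
    then show ?thesis by auto
  qed
  have Me0: "0 \<le> Me e" for e using Mex[of e] by auto
  have hS: "h (e k) \<le> S e" if "k < n" for e k
    unfolding S_def using that by (intro member_le_sum) (auto simp: h_def)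
  define A where "A = real n * sqrt 2"
  have A: "A > 0" unfolding A_def using n by simp
  have tang: "Me e / q \<le> S e / A + ln A - 1" for e
  proof -
    obtain k where k: "k < n" "Me e = (e k)\<^sup>2" using Mex by blast
    define y where "y = (e k)\<^sup>2 / q"
    have "1 + (y - ln A) \<le> exp (y - ln A)" by (rule exp_ge_add_one_self)
    also have "exp (y - ln A) = h (e k) / A" unfolding h_def y_def using A by (simp add: exp_diff)
    also have "\<dots> \<le> S e / A" using hS[OF k(1)] A by (simp add: divide_right_mono)
    finally show ?thesis using k(2) unfolding y_def by simp
  qed
  have Mb: "Me e \<le> q * S e" for e
  proof -
    obtain k where k: "k < n" "Me e = (e k)\<^sup>2" using Mex by blast
    have "(e k)\<^sup>2 / q \<le> h (e k)" unfolding h_def using exp_ge_add_one_self[of "(e k)\<^sup>2 / q"] by linarith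
    then have "(e k)\<^sup>2 \<le> q * h (e k)" using q by (simp add: field_simps)
    also have "\<dots> \<le> q * S e" using hS[OF k(1)] q by simp
    finally show ?thesis using k by simp
  qed
  have Mi: "integrable ?N Me"
  proof (rule Bochner_Integration.integrable_bound[where f="\<lambda>e. q * S e"])
    show "integrable ?N (\<lambda>e. q * S e)" using Si by simp
    show "Me \<in> borel_measurable ?N" by (rule Mem)
    show "AE e in ?N. norm (Me e) \<le> norm (q * S e)"
    proof (rule AE_I2)
      fix e
      have "0 \<le> S e" unfolding S_def h_def by (intro sum_nonneg) auto
      then show "norm (Me e) \<le> norm (q * S e)" using Me0[of e] Mb[of e] q by simp
    qed
  qed
  then show "integrable (PiM {..<n} (\<lambda>_. density lborel (normal_density 0 \<sigma>))) (\<lambda>e. Max ((\<lambda>i. (e i)\<^sup>2) ` {..<n}))"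
    unfolding Me_def G_def .
  have "(\<integral>e. Me e / q \<partial>?N) \<le> (\<integral>e. S e / A + ln A - 1 \<partial>?N)"
    using Mi Si tang by (intro integral_mono) auto
  also have "\<dots> = integral\<^sup>L ?N S / A + ln A - 1"
    using Si by (simp add: PN.prob_space)
  also have "\<dots> = ln A" unfolding SI A_def using n by simp
  finally have "integral\<^sup>L ?N Me / q \<le> ln A" by simp
  then have "integral\<^sup>L ?N Me \<le> q * ln A" using q by (simp add: field_simps)
  also have "ln A = ln (real n) + ln 2 / 2" unfolding A_def using n by (simp add: ln_mult ln_sqrt)
  finally show "(\<integral>e. Max ((\<lambda>i. (e i)\<^sup>2) ` {..<n}) \<partial>PiM {..<n} (\<lambda>_. density lborel (normal_density 0 \<sigma>)))
           \<le> \<sigma>\<^sup>2 * (4 * ln (real n) + 2 * ln 2)"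
    unfolding Me_def G_def q_def by (simp add: algebra_simps)
qed




lemma final_arith:
  fixes K u L l2 :: real and B Bo :: nat
  assumes "B \<ge> 1" "Bo \<ge> 1" "0 \<le> u" "0 \<le> L" "l2 \<le> 1"
  shows "(16 / real B + 9 / real Bo) * (2 * K\<^sup>2 + 2 * (u * (4 * L + 2 * l2)))
         \<le> (64 / real B + 80 / real Bo) * (K\<^sup>2 + u * (1 + 4 * L))"
proof -
  define Z where "Z = K\<^sup>2 + u * (1 + 4 * L)"
  have Z0: "0 \<le> Z" unfolding Z_def using assms by simp
  have X: "2 * K\<^sup>2 + 2 * (u * (4 * L + 2 * l2)) \<le> 4 * Z"
  proof -
    have "u * l2 \<le> u * 1" using assms by (intro mult_left_mono) auto
    moreover have "0 \<le> u * L" using assms by simp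
    moreover have "0 \<le> K\<^sup>2" by simp
    moreover have "2 * K\<^sup>2 + 2 * (u * (4 * L + 2 * l2)) = 2 * K\<^sup>2 + 8 * (u * L) + 4 * (u * l2)"
      by (simp add: algebra_simps)
    moreover have "4 * Z = 4 * K\<^sup>2 + 4 * u + 16 * (u * L)" unfolding Z_def by (simp add: algebra_simps)
    ultimately show ?thesis by linarith
  qed
  have C0: "0 \<le> 16 / real B + 9 / real Bo" by simp
  have "(16 / real B + 9 / real Bo) * (2 * K\<^sup>2 + 2 * (u * (4 * L + 2 * l2))) \<le> (16 / real B + 9 / real Bo) * (4 * Z)"
    using X C0 by (rule mult_left_mono)
  also have "\<dots> = (64 / real B + 36 / real Bo) * Z" by (simp add: algebra_simps)
  also have "\<dots> \<le> (64 / real B + 80 / real Bo) * Z"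
    using Z0 assms by (intro mult_right_mono) (auto simp: divide_right_mono)
  finally show ?thesis unfolding Z_def .
qed

theorem theorem1:
  fixes n B Bo :: nat and \<sigma> :: real and F :: "'a \<Rightarrow> real" and X :: "nat \<Rightarrow> 'a"
    and S :: "'a set" and x :: 'a
    and Q :: "'w measure" and Qo :: "'v measure"
    and W :: "'a \<Rightarrow> (nat \<Rightarrow> real) \<Rightarrow> 'w \<Rightarrow> nat \<Rightarrow> real"
    and V :: "'a \<Rightarrow> (nat \<Rightarrow> real) \<Rightarrow> 'v \<Rightarrow> nat \<Rightarrow> nat \<Rightarrow> real"
  assumes n: "n \<ge> 1" and B: "B \<ge> 1" and Bo: "Bo \<ge> 1" and sigma: "\<sigma> > 0"
    and Q: "prob_space Q" and Qo: "prob_space Qo"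
    and supp: "\<forall>i<n. X i \<in> S" and Fbdd: "bdd_above ((\<lambda>z. \<bar>F z\<bar>) ` S)"
    and W_meas: "\<forall>z i. (\<lambda>(y, w). W z y w i) \<in> borel_measurable (PiM {..<n} (\<lambda>_. borel) \<Otimes>\<^sub>M Q)"
    and W_wt: "\<forall>z y w. (\<forall>i<n. 0 \<le> W z y w i \<and> W z y w i \<le> 1) \<and> (\<Sum>i<n. W z y w i) = 1"
    and V_meas: "\<forall>z i j. (\<lambda>(y, w). V z y w i j) \<in> borel_measurable (PiM {..<n} (\<lambda>_. borel) \<Otimes>\<^sub>M Qo)"
    and V_wt: "\<forall>z y w. (\<forall>i<n. \<forall>j<n. 0 \<le> V z y w i j \<and> V z y w i j \<le> 1)
                        \<and> (\<Sum>i<n. \<Sum>j<n. V z y w i j) = 1"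
  shows "(\<integral>(e, r). (bc_ens n X W V B Bo (responses n F X e) (fst r) (snd r) x
                      - bc_inf n X W V B Bo Q Qo (responses n F X e) x)\<^sup>2
            \<partial>(noise_measure n \<sigma> \<Otimes>\<^sub>M rand_measure B Bo Q Qo))
         \<le> (64 / real B + 80 / real Bo) * ((SUP z\<in>S. \<bar>F z\<bar>)\<^sup>2 + \<sigma>\<^sup>2 * (1 + 4 * ln (real n)))"
proof -
  let ?N = "noise_measure n \<sigma>" and ?R = "rand_measure B Bo Q Qo"
  let ?g = "\<lambda>e r. (bc_ens n X W V B Bo (responses n F X e) (fst r) (snd r) x
                      - bc_inf n X W V B Bo Q Qo (responses n F X e) x)\<^sup>2"
  define K where "K = (SUP z\<in>S. \<bar>F z\<bar>)"
  have KF: "\<bar>F z\<bar> \<le> K" if "z \<in> S" for z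
    unfolding K_def using Fbdd that by (rule cSUP_upper2) simp
  have K0: "0 \<le> K" using KF[of "X 0"] supp n by force
  define Me where "Me e = Max ((\<lambda>i. (e i)\<^sup>2) ` {..<n})" for e :: "nat \<Rightarrow> real"
  define C where "C = 16 / real B + 9 / real Bo"
  have C0: "0 \<le> C" unfolding C_def by simp
  have Nd: "?N = PiM {..<n} (\<lambda>_. density lborel (normal_density 0 \<sigma>))" by (simp add: noise_measure_def)
  have PN: "prob_space ?N" unfolding Nd using prob_space_normal_density sigma
    by (intro prob_space_PiM) blast
  have PR: "prob_space ?R" unfolding rand_measure_def using Q Qo
    by (intro prob_space_pair prob_space_PiM) auto
  have Mei: "integrable ?N Me" unfolding Nd Me_def using gauss_max(1)[OF sigma n] .
  have MeI: "integral\<^sup>L ?N Me \<le> \<sigma>\<^sup>2 * (4 * ln (real n) + 2 * ln 2)"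
    unfolding Nd Me_def using gauss_max(2)[OF sigma n] .
  have pt: "(\<integral>r. ?g e r \<partial>?R) \<le> C * (2 * K\<^sup>2 + 2 * Me e)" for e
  proof -
    define Y where "Y = responses n F X e"
    have Ysp: "Y \<in> space (PiM {..<n} (\<lambda>_. borel))"
      unfolding Y_def responses_def by (simp add: space_PiM)
    have Wm: "(\<lambda>w. W z Y w i) \<in> borel_measurable Q" for z i
      using measurable_Pair2[OF W_meas[rule_format, of z i] Ysp] by simp
    have Vm: "(\<lambda>w. V z Y w i j) \<in> borel_measurable Qo" for z i j
      using measurable_Pair2[OF V_meas[rule_format, of z i j] Ysp] by simp
    have Me_ge: "(e i)\<^sup>2 \<le> Me e" if "i < n" for i
      unfolding Me_def using that by (intro Max_ge) auto
    have Yb: "\<forall>i<n. \<bar>Y i\<bar> \<le> sqrt (2 * K\<^sup>2 + 2 * Me e)"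
    proof (intro allI impI)
      fix i assume i: "i < n"
      have Yi: "Y i = F (X i) + e i" unfolding Y_def responses_def using i by simp
      have "(F (X i))\<^sup>2 \<le> K\<^sup>2" using sq_le[OF KF[of "X i"]] supp i by simp
      moreover have "(F (X i) + e i)\<^sup>2 \<le> 2 * (F (X i))\<^sup>2 + 2 * (e i)\<^sup>2"
        using sum_squares_ge_zero[of "F (X i) - e i" 0] by (simp add: power2_eq_square algebra_simps)
      ultimately have "(Y i)\<^sup>2 \<le> 2 * K\<^sup>2 + 2 * Me e" unfolding Yi using Me_ge[OF i] by linarith
      then have "sqrt ((Y i)\<^sup>2) \<le> sqrt (2 * K\<^sup>2 + 2 * Me e)" by (rule real_sqrt_le_mono)
      then show "\<bar>Y i\<bar> \<le> sqrt (2 * K\<^sup>2 + 2 * Me e)" by simp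
    qed
    have "(\<integral>r. ?g e r \<partial>?R) \<le> C * (sqrt (2 * K\<^sup>2 + 2 * Me e))\<^sup>2"
      unfolding C_def Y_def[symmetric] using rand_bound[OF B Bo Q Qo Wm Vm W_wt V_wt Yb] .
    also have "(sqrt (2 * K\<^sup>2 + 2 * Me e))\<^sup>2 = 2 * K\<^sup>2 + 2 * Me e"
    proof -
      have "(e 0)\<^sup>2 \<le> Me e" using Me_ge[of 0] n by simp
      then have "0 \<le> Me e" using zero_le_power2[of "e 0"] by linarith
      then show ?thesis by simp
    qed
    finally show ?thesis .
  qed
  have RHS0: "0 \<le> (64 / real B + 80 / real Bo) * (K\<^sup>2 + \<sigma>\<^sup>2 * (1 + 4 * ln (real n)))"
    using n by (intro mult_nonneg_nonneg add_nonneg_nonneg) auto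
  show ?thesis
  proof (cases "integrable (?N \<Otimes>\<^sub>M ?R) (case_prod ?g)")
    case False
    then show ?thesis using RHS0 unfolding K_def by (simp add: not_integrable_integral_eq)
  next
    case True
    interpret NR: pair_prob_space ?N ?R
      using PN PR by (simp add: pair_prob_space_def pair_sigma_finite_def prob_space_imp_sigma_finite)
    interpret PN': prob_space ?N by (rule PN)
    have "integral\<^sup>L (?N \<Otimes>\<^sub>M ?R) (case_prod ?g) = (\<integral>e. (\<integral>r. ?g e r \<partial>?R) \<partial>?N)"
      using NR.integral_fst[OF True] by simp
    also have "\<dots> \<le> (\<integral>e. C * (2 * K\<^sup>2 + 2 * Me e) \<partial>?N)"
      using NR.integrable_fst[OF True] Mei pt by (intro integral_mono) auto
    also have "\<dots> = C * (2 * K\<^sup>2 + 2 * integral\<^sup>L ?N Me)"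
      using Mei by (simp add: prob_space.prob_space[OF PN])
    also have "\<dots> \<le> C * (2 * K\<^sup>2 + 2 * (\<sigma>\<^sup>2 * (4 * ln (real n) + 2 * ln 2)))"
      using MeI C0 by (intro mult_left_mono) auto
    also have "\<dots> \<le> (64 / real B + 80 / real Bo) * (K\<^sup>2 + \<sigma>\<^sup>2 * (1 + 4 * ln (real n)))"
      unfolding C_def
    proof (rule final_arith[OF B Bo])
      show "ln 2 \<le> (1::real)" using ln_le_minus_one[of 2] by simp
    qed (use n in auto)
    finally show ?thesis unfolding K_def by simp
  qed
qed


end
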